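(* For $n\ge1$, let $X_n=K_4'^{\,\Box n}$ be the $n$-fold Cartesian product of $K_4'$ with itself. Then $\rho(X_n)=3n$ and $\lambda_1(X_n)=n$.
   Context: For a digraph $X$ (finite vertex set, arcs are ordered pairs of distinct vertices), $H(X)$ has $(u,v)$-entry $1$ if $uv$ and $vu$ are arcs, $i$ if only $uv$ is an arc, $-i$ if only $vu$ is an arc, and $0$ otherwise; $\lambda_1(X)$ is its largest eigenvalue and $\rho(X)$ the largest absolute value of an eigenvalue. $K_4'$ is the digraph on $x_1,x_2,x_3,x_4$ with arcs $x_1x_2,x_2x_3,x_3x_4,x_4x_1$ together with the digons $\{x_1,x_3\}$ and $\{x_2,x_4\}$ (i.e., both arcs $x_1x_3,x_3x_1$ and both $x_2x_4,x_4x_2$). The Cartesian product $X\,\Box\,Y$ has vertex set $V(X)\times V(Y)$ and an arc from $(x_1,y_1)$ to $(x_2,y_2)$ whenever either $x_1x_2$ is an arc of $X$ and $y_1=y_2$, or $y_1y_2$ is an arc of $Y$ and $x_1=x_2$. *)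

theory Defs
  imports Complex_Main
begin

record 'a digraph =
  verts :: "'a set"
  arcs  :: "('a \<times> 'a) set"

definition herm_adj :: "'a digraph \<Rightarrow> 'a \<Rightarrow> 'a \<Rightarrow> complex" where
  "herm_adj X u v =
     (if (u, v) \<in> arcs X \<and> (v, u) \<in> arcs X then 1
      else if (u, v) \<in> arcs X then \<i>
      else if (v, u) \<in> arcs X then - \<i>
      else 0)"

definition herm_eigenvalue :: "'a digraph \<Rightarrow> complex \<Rightarrow> bool" where
  "herm_eigenvalue X \<mu> \<longleftrightarrow>
     (\<exists>f :: 'a \<Rightarrow> complex.
        (\<forall>v. v \<notin> verts X \<longrightarrow> f v = 0) \<and> (\<exists>v\<in>verts X. f v \<noteq> 0) \<and>
        (\<forall>u\<in>verts X. (\<Sum>v\<in>verts X. herm_adj X u v * f v) = \<mu> * f u))"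

definition herm_spectrum :: "'a digraph \<Rightarrow> complex set" where
  "herm_spectrum X = {\<mu>. herm_eigenvalue X \<mu>}"

text \<open>Largest eigenvalue (eigenvalues of a Hermitian matrix are real).\<close>
definition lambda1 :: "'a digraph \<Rightarrow> real" where
  "lambda1 X = Max (Re ` herm_spectrum X)"

definition herm_rho :: "'a digraph \<Rightarrow> real" where
  "herm_rho X = Max (cmod ` herm_spectrum X)"

text \<open>The digraph K4' on x1..x4 (represented by 1..4).\<close>
definition K4' :: "nat digraph" where
  "K4' = \<lparr> verts = {1, 2, 3, 4},
           arcs = {(1,2), (2,3), (3,4), (4,1), (1,3), (3,1), (2,4), (4,2)} \<rparr>"

definition cart_prod :: "'a digraph \<Rightarrow> 'b digraph \<Rightarrow> ('a \<times> 'b) digraph" where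
  "cart_prod X Y = \<lparr> verts = verts X \<times> verts Y,
     arcs = {((x1, y1), (x2, y2)) | x1 y1 x2 y2.
               ((x1, x2) \<in> arcs X \<and> y1 = y2 \<and> y1 \<in> verts Y) \<or>
               ((y1, y2) \<in> arcs Y \<and> x1 = x2 \<and> x1 \<in> verts X)} \<rparr>"

definition digraph_map :: "('a \<Rightarrow> 'b) \<Rightarrow> 'a digraph \<Rightarrow> 'b digraph" where
  "digraph_map g X = \<lparr> verts = g ` verts X,
     arcs = (\<lambda>(u, v). (g u, g v)) ` arcs X \<rparr>"

text \<open>n-fold Cartesian power X^{\<box> n}, with vertices represented as lists of length n:
  X^{\<box> 0} is the one-vertex digraph, X^{\<box> (n+1)} = X \<box> X^{\<box> n} (pairs (x, xs) written x # xs).\<close>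
fun cart_pow :: "'a digraph \<Rightarrow> nat \<Rightarrow> 'a list digraph" where
  "cart_pow X 0 = \<lparr> verts = {[]}, arcs = {} \<rparr>"
| "cart_pow X (Suc n) = digraph_map (\<lambda>(x, xs). x # xs) (cart_prod X (cart_pow X n))"

end

theory Submission
  imports Defs
begin

lemma verts_pow_Suc: "verts (cart_pow X (Suc n)) = (\<lambda>(x,xs). x#xs) ` (verts X \<times> verts (cart_pow X n))"
  by (simp add: digraph_map_def cart_prod_def)

lemma arcs_pow_Suc: "((x#xs, y#ys) \<in> arcs (cart_pow X (Suc n))) \<longleftrightarrow>
   ((x,y)\<in>arcs X \<and> xs=ys \<and> xs \<in> verts (cart_pow X n)) \<or> ((xs,ys) \<in> arcs (cart_pow X n) \<and> x=y \<and> x\<in>verts X)"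
proof -
  have "arcs (cart_pow X (Suc n)) = (\<lambda>((a,as),(b,bs)). (a#as, b#bs)) ` arcs (cart_prod X (cart_pow X n))"
    by (simp add: digraph_map_def case_prod_beta')
  also have "(x#xs, y#ys) \<in> \<dots> \<longleftrightarrow> ((x,xs),(y,ys)) \<in> arcs (cart_prod X (cart_pow X n))"
    by (auto simp: image_iff intro!: bexI[of _ "((x,xs),(y,ys))"])
  finally show ?thesis by (simp add: cart_prod_def)
qed

lemma arcs_pow_cons: "(u,v) \<in> arcs (cart_pow X (Suc n)) \<Longrightarrow> \<exists>x xs y ys. u = x#xs \<and> v = y#ys"
  by (auto simp: digraph_map_def cart_prod_def)

lemma irrefl_pow: "\<forall>u. (u,u)\<notin>arcs X \<Longrightarrow> (u,u) \<notin> arcs (cart_pow X n)"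
proof (induction n arbitrary: u)
  case 0 then show ?case by simp
next
  case (Suc n)
  show ?case
  proof (cases u)
    case Nil then show ?thesis using arcs_pow_cons by blast
  next
    case (Cons x xs) then show ?thesis using Suc by (simp only: arcs_pow_Suc) auto
  qed
qed

lemma herm_pow_Suc:
  assumes irr: "\<forall>u. (u,u)\<notin>arcs X"
  shows "herm_adj (cart_pow X (Suc n)) (x#xs) (y#ys) =
     (if xs = ys \<and> xs \<in> verts (cart_pow X n) then herm_adj X x y else 0)
   + (if x = y \<and> x \<in> verts X then herm_adj (cart_pow X n) xs ys else 0)"
  using irr irrefl_pow[OF irr, of xs n]
  unfolding herm_adj_def arcs_pow_Suc by auto

lemma sum_pow_Suc: "(\<Sum>v\<in>verts (cart_pow X (Suc n)). F v) = (\<Sum>y\<in>verts X. \<Sum>ys\<in>verts (cart_pow X n). F (y#ys))"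
proof -
  have inj: "inj_on (\<lambda>(x,xs). x#xs) (verts X \<times> verts (cart_pow X n))"
    by (auto simp: inj_on_def)
  have "(\<Sum>v\<in>verts (cart_pow X (Suc n)). F v) = (\<Sum>p\<in>verts X \<times> verts (cart_pow X n). F ((\<lambda>(x,xs). x#xs) p))"
    unfolding verts_pow_Suc using sum.reindex[OF inj, of F] by (simp add: comp_def)
  also have "\<dots> = (\<Sum>(y,ys)\<in>verts X \<times> verts (cart_pow X n). F (y#ys))"
    by (rule sum.cong) auto
  also have "\<dots> = (\<Sum>y\<in>verts X. \<Sum>ys\<in>verts (cart_pow X n). F (y#ys))"
    by (rule sum.cartesian_product[symmetric])
  finally show ?thesis .
qed


abbreviation "hK \<equiv> herm_adj K4'"
lemma vK: "verts K4' = {1,2,3,4}" by (simp add: K4'_def)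
lemma irrK: "\<forall>u. (u,u)\<notin>arcs K4'" by (simp add: K4'_def)
lemma hK_vals:
 "hK 1 1 = 0" "hK 1 2 = \<i>" "hK 1 3 = 1" "hK 1 4 = -\<i>"
 "hK 2 1 = -\<i>" "hK 2 2 = 0" "hK 2 3 = \<i>" "hK 2 4 = 1"
 "hK 3 1 = 1" "hK 3 2 = -\<i>" "hK 3 3 = 0" "hK 3 4 = \<i>"
 "hK 4 1 = \<i>" "hK 4 2 = 1" "hK 4 3 = -\<i>" "hK 4 4 = 0"
  by (simp_all add: herm_adj_def K4'_def)
definition pK :: "nat \<Rightarrow> nat \<Rightarrow> complex" where "pK x y = (hK x y + (if x=y then 3 else 0))/4"
definition qK :: "nat \<Rightarrow> nat \<Rightarrow> complex" where "qK x y = ((if x=y then 1 else 0) - hK x y)/4"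
lemma pH: "x \<in> verts K4' \<Longrightarrow> z \<in> verts K4' \<Longrightarrow> (\<Sum>y\<in>verts K4'. pK x y * hK y z) = pK x z"
  unfolding vK pK_def by (auto simp: hK_vals hK_vals[unfolded One_nat_def] field_simps)
lemma qH: "x \<in> verts K4' \<Longrightarrow> z \<in> verts K4' \<Longrightarrow> (\<Sum>y\<in>verts K4'. qK x y * hK y z) = -3 * qK x z"
  unfolding vK qK_def by (auto simp: hK_vals hK_vals[unfolded One_nat_def] field_simps)
lemma rowK: "x \<in> verts K4' \<Longrightarrow> (\<Sum>y\<in>verts K4'. hK x y) = 1"
  unfolding vK by (auto simp: hK_vals hK_vals[unfolded One_nat_def])
definition w :: "nat \<Rightarrow> complex" where "w x = (if x = 1 then 1 else if x = 2 then \<i> else if x = 3 then -1 else -\<i>)"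
lemma wK: "x \<in> verts K4' \<Longrightarrow> (\<Sum>y\<in>verts K4'. hK x y * w y) = -3 * w x"
  unfolding vK by (auto simp: hK_vals hK_vals[unfolded One_nat_def] w_def)

abbreviation "V n \<equiv> verts (cart_pow K4' n)"
abbreviation "h n \<equiv> herm_adj (cart_pow K4' n)"
declare cart_pow.simps(2)[simp del]
lemma finV: "finite (V n)"
  by (induction n) (simp_all only: verts_pow_Suc, auto simp: vK)
lemma cons_V: "x#xs \<in> V (Suc n) \<longleftrightarrow> x\<in>verts K4' \<and> xs\<in>V n"
  unfolding verts_pow_Suc by auto
lemma V_Suc: "u \<in> V (Suc n) \<Longrightarrow> \<exists>x xs. u = x#xs \<and> x\<in>verts K4' \<and> xs \<in> V n"
  unfolding verts_pow_Suc by auto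
lemma V0: "V 0 = {[]}" by simp
lemma h0: "h 0 u v = 0" by (simp add: herm_adj_def)

lemma sum_h_Suc:
  assumes x: "x\<in>verts K4'" and xs: "xs \<in> V n"
  shows "(\<Sum>v\<in>V (Suc n). h (Suc n) (x#xs) v * g v) =
     (\<Sum>y\<in>verts K4'. hK x y * g (y#xs)) + (\<Sum>ys\<in>V n. h n xs ys * g (x#ys))"
proof -
  have "(\<Sum>v\<in>V (Suc n). h (Suc n) (x#xs) v * g v) =
     (\<Sum>y\<in>verts K4'. \<Sum>ys\<in>V n. h (Suc n) (x#xs) (y#ys) * g (y#ys))"
    by (rule sum_pow_Suc)
  also have "\<dots> = (\<Sum>y\<in>verts K4'. \<Sum>ys\<in>V n.
      (if xs = ys then hK x y * g (y#xs) else 0) + (if x = y then h n xs ys * g (x#ys) else 0))"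
    using x xs by (intro sum.cong refl) (simp add: herm_pow_Suc[OF irrK] distrib_right)
  also have "\<dots> = (\<Sum>y\<in>verts K4'. \<Sum>ys\<in>V n. (if xs = ys then hK x y * g (y#xs) else 0))
      + (\<Sum>y\<in>verts K4'. \<Sum>ys\<in>V n. (if x = y then h n xs ys * g (x#ys) else 0))"
    by (simp add: sum.distrib)
  also have "(\<Sum>y\<in>verts K4'. \<Sum>ys\<in>V n. (if xs = ys then hK x y * g (y#xs) else 0))
     = (\<Sum>y\<in>verts K4'. hK x y * g (y#xs))"
    using xs finV[of n] by (simp add: sum.delta)
  also have "(\<Sum>y\<in>verts K4'. \<Sum>ys\<in>V n. (if x = y then h n xs ys * g (x#ys) else 0))
     = (\<Sum>y\<in>verts K4'. if x = y then (\<Sum>ys\<in>V n. h n xs ys * g (x#ys)) else 0)"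
    by (intro sum.cong refl) auto
  also have "\<dots> = (\<Sum>ys\<in>V n. h n xs ys * g (x#ys))"
    using x by (simp add: sum.delta vK)
  finally show ?thesis .
qed

lemma rowsum: "u \<in> V n \<Longrightarrow> (\<Sum>v\<in>V n. h n u v) = of_nat n"
proof (induction n arbitrary: u)
  case 0 then show ?case by (simp add: herm_adj_def)
next
  case (Suc n)
  then obtain x xs where u: "u = x#xs" "x\<in>verts K4'" "xs \<in> V n" using V_Suc by blast
  have "(\<Sum>v\<in>V (Suc n). h (Suc n) u v) = (\<Sum>v\<in>V (Suc n). h (Suc n) u v * 1)" by simp
  also have "\<dots> = (\<Sum>y\<in>verts K4'. hK x y) + (\<Sum>ys\<in>V n. h n xs ys)"
    using sum_h_Suc[OF u(2,3), of "\<lambda>_. 1"] u(1) by simp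
  also have "\<dots> = 1 + of_nat n" using rowK[OF u(2)] Suc.IH[OF u(3)] by simp
  finally show ?case by simp
qed

lemma wsum: "u \<in> V n \<Longrightarrow> (\<Sum>v\<in>V n. h n u v * prod_list (map w v)) = - 3 * of_nat n * prod_list (map w u)"
proof (induction n arbitrary: u)
  case 0 then show ?case by (simp add: herm_adj_def)
next
  case (Suc n)
  then obtain x xs where u: "u = x#xs" "x\<in>verts K4'" "xs \<in> V n" using V_Suc by blast
  have "(\<Sum>v\<in>V (Suc n). h (Suc n) u v * prod_list (map w v))
     = (\<Sum>y\<in>verts K4'. hK x y * (w y * prod_list (map w xs))) + (\<Sum>ys\<in>V n. h n xs ys * (w x * prod_list (map w ys)))"
    using sum_h_Suc[OF u(2,3), of "\<lambda>v. prod_list (map w v)"] u(1) by simp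
  also have "\<dots> = (\<Sum>y\<in>verts K4'. hK x y * w y) * prod_list (map w xs) + w x * (\<Sum>ys\<in>V n. h n xs ys * prod_list (map w ys))"
    by (simp add: sum_distrib_left sum_distrib_right mult_ac)
  also have "\<dots> = - 3 * of_nat (Suc n) * prod_list (map w u)"
    using wK[OF u(2)] Suc.IH[OF u(3)] u(1) by (simp add: algebra_simps)
  finally show ?case .
qed


lemma slice:
  assumes E: "\<forall>x\<in>verts K4'. \<forall>xs\<in>V n. (\<Sum>y\<in>verts K4'. hK x y * f(y#xs)) + (\<Sum>ys\<in>V n. h n xs ys * f(x#ys)) = \<mu> * f(x#xs)"
    and C: "\<forall>x\<in>verts K4'. \<forall>z\<in>verts K4'. (\<Sum>y\<in>verts K4'. c x y * hK y z) = \<nu> * c x z"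
    and x: "x\<in>verts K4'" and xs: "xs\<in>V n"
  shows "(\<Sum>ys\<in>V n. h n xs ys * (\<Sum>y\<in>verts K4'. c x y * f(y#ys))) = (\<mu> - \<nu>) * (\<Sum>y\<in>verts K4'. c x y * f(y#xs))"
proof -
  have "(\<Sum>ys\<in>V n. h n xs ys * (\<Sum>y\<in>verts K4'. c x y * f(y#ys)))
      = (\<Sum>y\<in>verts K4'. c x y * (\<Sum>ys\<in>V n. h n xs ys * f(y#ys)))"
    unfolding sum_distrib_left by (subst sum.swap) (simp add: mult_ac)
  also have "\<dots> = (\<Sum>y\<in>verts K4'. c x y * (\<mu> * f(y#xs) - (\<Sum>z\<in>verts K4'. hK y z * f(z#xs))))"
  proof (intro sum.cong refl)
    fix y assume y: "y \<in> verts K4'"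
    show "c x y * (\<Sum>ys\<in>V n. h n xs ys * f(y#ys)) = c x y * (\<mu> * f(y#xs) - (\<Sum>z\<in>verts K4'. hK y z * f(z#xs)))"
    proof -
      have e: "(\<Sum>z\<in>verts K4'. hK y z * f(z#xs)) + (\<Sum>ys\<in>V n. h n xs ys * f(y#ys)) = \<mu> * f(y#xs)"
        using E y xs by blast
      have "(\<Sum>ys\<in>V n. h n xs ys * f(y#ys)) = \<mu> * f(y#xs) - (\<Sum>z\<in>verts K4'. hK y z * f(z#xs))"
        using e by (metis add_diff_cancel_left')
      then show ?thesis by simp
    qed
  qed
  also have "\<dots> = \<mu> * (\<Sum>y\<in>verts K4'. c x y * f(y#xs)) - (\<Sum>y\<in>verts K4'. \<Sum>z\<in>verts K4'. c x y * hK y z * f(z#xs))"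
    by (simp add: right_diff_distrib sum_subtractf sum_distrib_left mult_ac)
  also have "(\<Sum>y\<in>verts K4'. \<Sum>z\<in>verts K4'. c x y * hK y z * f(z#xs)) = (\<Sum>z\<in>verts K4'. (\<Sum>y\<in>verts K4'. c x y * hK y z) * f(z#xs))"
    unfolding sum_distrib_right by (subst sum.swap) (simp add: mult_ac)
  also have "\<dots> = (\<Sum>z\<in>verts K4'. \<nu> * (c x z * f(z#xs)))"
    using C x by (intro sum.cong refl) simp
  also have "\<dots> = \<nu> * (\<Sum>z\<in>verts K4'. c x z * f(z#xs))" by (simp add: sum_distrib_left)
  finally show ?thesis by (simp add: left_diff_distrib)
qed

lemma pq: "pK x y + qK x y = (if x = y then 1 else 0)"
  by (simp add: pK_def qK_def field_simps)

lemma upper: "herm_eigenvalue (cart_pow K4' n) \<mu> \<Longrightarrow> \<exists>k\<le>n. \<mu> = of_int (int n - 4 * int k)"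
proof (induction n arbitrary: \<mu>)
  case 0
  then obtain f where "f [] \<noteq> 0" "0 * f [] = \<mu> * f []"
    by (auto simp: herm_eigenvalue_def herm_adj_def)
  then show ?case by simp
next
  case (Suc n)
  from Suc.prems obtain f where f0: "\<forall>v. v \<notin> V (Suc n) \<longrightarrow> f v = 0" and v0: "\<exists>v\<in>V (Suc n). f v \<noteq> 0"
    and eq: "\<forall>u\<in>V (Suc n). (\<Sum>v\<in>V (Suc n). h (Suc n) u v * f v) = \<mu> * f u"
    unfolding herm_eigenvalue_def by blast
  have E: "\<forall>x\<in>verts K4'. \<forall>xs\<in>V n. (\<Sum>y\<in>verts K4'. hK x y * f(y#xs)) + (\<Sum>ys\<in>V n. h n xs ys * f(x#ys)) = \<mu> * f(x#xs)"
  proof (intro ballI)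
    fix x xs assume x: "x\<in>verts K4'" and xs: "xs \<in> V n"
    show "(\<Sum>y\<in>verts K4'. hK x y * f(y#xs)) + (\<Sum>ys\<in>V n. h n xs ys * f(x#ys)) = \<mu> * f(x#xs)"
      using eq[rule_format, of "x#xs"] sum_h_Suc[OF x xs, of f] x xs by (simp add: cons_V)
  qed
  have eig: "herm_eigenvalue (cart_pow K4' n) (\<mu> - \<nu>)"
    if C: "\<forall>x\<in>verts K4'. \<forall>z\<in>verts K4'. (\<Sum>y\<in>verts K4'. c x y * hK y z) = \<nu> * c x z"
      and x: "x\<in>verts K4'" and xs: "xs \<in> V n" and nz: "(\<Sum>y\<in>verts K4'. c x y * f(y#xs)) \<noteq> 0" for c \<nu> x xs
  proof -
    define g where "g = (\<lambda>ys. if ys \<in> V n then (\<Sum>y\<in>verts K4'. c x y * f(y#ys)) else 0)"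
    have g1: "\<forall>v. v \<notin> V n \<longrightarrow> g v = 0" by (simp add: g_def)
    have g2: "\<exists>v\<in>V n. g v \<noteq> 0" using xs nz by (auto simp: g_def)
    have g3: "\<forall>u\<in>V n. (\<Sum>v\<in>V n. h n u v * g v) = (\<mu> - \<nu>) * g u"
    proof
      fix u assume u: "u \<in> V n"
      have "(\<Sum>v\<in>V n. h n u v * g v) = (\<Sum>v\<in>V n. h n u v * (\<Sum>y\<in>verts K4'. c x y * f(y#v)))"
        by (rule sum.cong) (auto simp: g_def)
      also have "\<dots> = (\<mu> - \<nu>) * (\<Sum>y\<in>verts K4'. c x y * f(y#u))"
        by (rule slice[OF E C x u])
      finally show "(\<Sum>v\<in>V n. h n u v * g v) = (\<mu> - \<nu>) * g u" using u by (simp add: g_def)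
    qed
    show ?thesis unfolding herm_eigenvalue_def using g1 g2 g3 by blast
  qed
  from v0 obtain x xs where x: "x\<in>verts K4'" and xs: "xs \<in> V n" and fx: "f (x#xs) \<noteq> 0"
    using V_Suc by blast
  have "(\<Sum>y\<in>verts K4'. (pK x y + qK x y) * f(y#xs)) = (\<Sum>y\<in>verts K4'. if x = y then f(y#xs) else 0)"
    by (rule sum.cong) (auto simp: pq)
  also have "\<dots> = f (x#xs)" using x by (simp add: vK)
  finally have "f (x#xs) = (\<Sum>y\<in>verts K4'. (pK x y + qK x y) * f(y#xs))" by simp
  also have "\<dots> = (\<Sum>y\<in>verts K4'. pK x y * f(y#xs)) + (\<Sum>y\<in>verts K4'. qK x y * f(y#xs))"
    by (simp add: distrib_right sum.distrib)
  finally have split: "(\<Sum>y\<in>verts K4'. pK x y * f(y#xs)) \<noteq> 0 \<or> (\<Sum>y\<in>verts K4'. qK x y * f(y#xs)) \<noteq> 0"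
    using fx by auto
  then show ?case
  proof
    assume "(\<Sum>y\<in>verts K4'. pK x y * f(y#xs)) \<noteq> 0"
    then have "herm_eigenvalue (cart_pow K4' n) (\<mu> - 1)"
      using eig[of pK 1, OF _ x xs] pH by simp
    then obtain k where k: "k \<le> n" "\<mu> - 1 = of_int (int n - 4 * int k)" using Suc.IH by blast
    then have "\<mu> = of_int (int (Suc n) - 4 * int k)" by (simp add: algebra_simps)
    then show ?thesis using k by (intro exI[of _ k]) simp
  next
    assume "(\<Sum>y\<in>verts K4'. qK x y * f(y#xs)) \<noteq> 0"
    then have "herm_eigenvalue (cart_pow K4' n) (\<mu> - (-3))"
      using eig[of qK "-3", OF _ x xs] qH by simp
    then obtain k where k: "k \<le> n" "\<mu> - (-3) = of_int (int n - 4 * int k)" using Suc.IH by blast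
    then have "\<mu> = of_int (int (Suc n) - 4 * int (Suc k))" by (simp add: algebra_simps)
    then show ?thesis using k by (intro exI[of _ "Suc k"]) simp
  qed
qed


lemma rep_V: "replicate n 1 \<in> V n"
  by (induction n) (auto simp: cons_V vK)

lemma eig_n: "herm_eigenvalue (cart_pow K4' n) (of_nat n)"
proof -
  have "\<forall>u\<in>V n. (\<Sum>v\<in>V n. h n u v * (if v \<in> V n then 1 else 0)) = of_nat n * (if u \<in> V n then 1 else 0)"
    using rowsum by simp
  then show ?thesis unfolding herm_eigenvalue_def using rep_V[of n]
    by (intro exI[of _ "\<lambda>v. if v \<in> V n then 1 else 0"]) auto
qed

lemma eig_3n: "herm_eigenvalue (cart_pow K4' n) (- 3 * of_nat n)"
proof -
  have "\<forall>u\<in>V n. (\<Sum>v\<in>V n. h n u v * (if v \<in> V n then prod_list (map w v) else 0))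
      = (- 3 * of_nat n) * (if u \<in> V n then prod_list (map w u) else 0)"
    using wsum by simp
  moreover have "prod_list (map w (replicate n 1)) = 1" by (induction n) (auto simp: w_def)
  ultimately show ?thesis unfolding herm_eigenvalue_def using rep_V[of n]
    by (intro exI[of _ "\<lambda>v. if v \<in> V n then prod_list (map w v) else 0"]) force
qed

theorem proposition5p5:
  fixes n :: nat
  assumes "n \<ge> 1"
  shows "herm_rho (cart_pow K4' n) = 3 * real n \<and> lambda1 (cart_pow K4' n) = real n"
proof -
  let ?S = "herm_spectrum (cart_pow K4' n)"
  have sub: "?S \<subseteq> (\<lambda>k. complex_of_int (int n - 4 * int k)) ` {..n}"
    using upper by (auto simp: herm_spectrum_def)
  have fin: "finite ?S" by (rule finite_subset[OF sub]) simp
  have n_in: "of_nat n \<in> ?S" using eig_n by (simp add: herm_spectrum_def)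
  have m_in: "- 3 * of_nat n \<in> ?S" using eig_3n by (simp add: herm_spectrum_def)
  have "Max (Re ` ?S) = real n"
  proof (rule Max_eqI)
    show "finite (Re ` ?S)" using fin by simp
    show "real n \<in> Re ` ?S" using n_in by force
    fix y assume "y \<in> Re ` ?S"
    then obtain k where "k \<le> n" "y = Re (complex_of_int (int n - 4 * int k))" using sub by blast
    then show "y \<le> real n" by simp
  qed
  moreover have "Max (cmod ` ?S) = 3 * real n"
  proof (rule Max_eqI)
    show "finite (cmod ` ?S)" using fin by simp
    have "cmod (- 3 * of_nat n) = 3 * real n" by (simp add: norm_mult)
    then show "3 * real n \<in> cmod ` ?S" using m_in by (metis image_eqI)
    fix y assume "y \<in> cmod ` ?S"
    then obtain k where k: "k \<le> n" "y = cmod (complex_of_int (int n - 4 * int k))" using sub by blast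
    then have "y = \<bar>real_of_int (int n - 4 * int k)\<bar>"
      by (metis norm_of_int)
    then show "y \<le> 3 * real n" using k(1) by simp
  qed
  ultimately show ?thesis by (simp add: herm_rho_def lambda1_def)
qed
end
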